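(* Let $\alpha\le1$ and $\theta=(\frac12,\alpha,\alpha)$. Let $\hat\mu\in\mathbb R_+^{|\mathcal N|\times|\mathcal I|}$ be an estimate of $(\mu_{ij})_{i\in\mathcal N,j\in\mathcal I}$, let $\hat P\in\arg\max_{P\in\mathcal P}W_\theta(\hat u(P))$ and $P^*\in\arg\max_{P\in\mathcal P}W_\theta(u(P))$, and let $$B(\hat\mu)=\max\Big(\max_{i\in[n]}\psi'(u_i(\hat P),\alpha),\ \max_{i\in[n]}\psi'(\hat u_i(P^* ),\alpha)\Big)$$ (with $B(\hat\mu)=+\infty$ if some argument is $0$ and $\alpha<1$). Then $$W_\theta(u(P^* ))-W_\theta(u(\hat P))\le 4B(\hat\mu)\sqrt{n\|v\|_2^2}\sqrt{\sum_{(i,j)\in\mathcal N\times\mathcal I}(\hat\mu_{ij}-\mu_{ij})^2}.$$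
   Context: Setup: users $\mathcal N=\{1,\dots,|\mathcal N|\}$, items $\mathcal I=\{|\mathcal N|+1,\dots,n\}$, $n=|\mathcal N|+|\mathcal I|$; exposure weights $v\in\mathbb R^{|\mathcal I|}$ with $v_1\ge\dots\ge v_{|\mathcal I|}\ge0$; values $\mu_{ij}\ge0$ for $i,j\in[n]$ ($\mu_{ij}$ for $i\in\mathcal N,j\in\mathcal I$ is the value of item $j$ to user $i$; $\mu_{ji}$ is the known value of user $i$ to item $j$, e.g. $\mu_{ji}=1$ in the exposure case). A ranking tensor is $P=(P_{ijk})_{i,j\in[n],k\in[|\mathcal I|]}$ with $P_{ijk}=0$ unless $i\in\mathcal N,j\in\mathcal I$, and each $P_i=(P_{ijk})_{j\in\mathcal I,k}$ doubly stochastic; $\mathcal P$ is the set of ranking tensors; $P_{ij}v=\sum_kP_{ijk}v_k$; true utilities $u_i(P)=\sum_{j=1}^n\mu_{ij}(P_{ij}+P_{ji})v$. Estimated utilities: $\hat u_i(P)=\sum_{j\in\mathcal I}\hat\mu_{ij}P_{ij}v$ for $i\in\mathcal N$ and $\hat u_j(P)=u_j(P)$ for $j\in\mathcal I$. Welfare: $\psi(x,\alpha)=x^\alpha$ ($\alpha>0$), $\log x$ ($\alpha=0$), $-x^\alpha$ ($\alpha<0$), with $\psi(0,\alpha)=-\infty$ for $\alpha\le0$; $\psi'(x,\alpha)$ is its derivative in $x$; $W_\theta(u)=(1-\lambda)\sum_{i\in\mathcal N}\psi(u_i,\alpha_1)+\lambda\sum_{j\in\mathcal I}\psi(u_j,\alpha_2)$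 for $\theta=(\lambda,\alpha_1,\alpha_2)$. *)

theory Defs
  imports Complex_Main "HOL-Library.Extended_Real"
begin

(* m = |N| users {1..m}; q = |I| items {m+1..m+q}; n = m + q agents *)

definition users :: "nat \<Rightarrow> nat set" where
  "users m = {1..m}"

definition items :: "nat \<Rightarrow> nat \<Rightarrow> nat set" where
  "items m q = {m+1..m+q}"

definition ranking_tensors :: "nat \<Rightarrow> nat \<Rightarrow> (nat \<Rightarrow> nat \<Rightarrow> nat \<Rightarrow> real) set" where
  "ranking_tensors m q = {P.
     (\<forall>i\<in>{1..m+q}. \<forall>j\<in>{1..m+q}. \<forall>k\<in>{1..q}.
        (\<not> (i \<in> users m \<and> j \<in> items m q) \<longrightarrow> P i j k = 0)) \<and>
     (\<forall>i\<in>users m.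
        (\<forall>j\<in>items m q. \<forall>k\<in>{1..q}. 0 \<le> P i j k) \<and>
        (\<forall>j\<in>items m q. (\<Sum>k=1..q. P i j k) = 1) \<and>
        (\<forall>k\<in>{1..q}. (\<Sum>j\<in>items m q. P i j k) = 1))}"

definition Pv :: "nat \<Rightarrow> (nat \<Rightarrow> real) \<Rightarrow> (nat \<Rightarrow> nat \<Rightarrow> nat \<Rightarrow> real) \<Rightarrow> nat \<Rightarrow> nat \<Rightarrow> real" where
  "Pv q v P i j = (\<Sum>k=1..q. P i j k * v k)"

definition util :: "nat \<Rightarrow> nat \<Rightarrow> (nat \<Rightarrow> nat \<Rightarrow> real) \<Rightarrow> (nat \<Rightarrow> real)
    \<Rightarrow> (nat \<Rightarrow> nat \<Rightarrow> nat \<Rightarrow> real) \<Rightarrow> nat \<Rightarrow> real" where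
  "util m q mu v P i = (\<Sum>j=1..m+q. mu i j * (Pv q v P i j + Pv q v P j i))"

definition util_hat :: "nat \<Rightarrow> nat \<Rightarrow> (nat \<Rightarrow> nat \<Rightarrow> real) \<Rightarrow> (nat \<Rightarrow> nat \<Rightarrow> real)
    \<Rightarrow> (nat \<Rightarrow> real) \<Rightarrow> (nat \<Rightarrow> nat \<Rightarrow> nat \<Rightarrow> real) \<Rightarrow> nat \<Rightarrow> real" where
  "util_hat m q muhat mu v P i =
     (if i \<in> users m then (\<Sum>j\<in>items m q. muhat i j * Pv q v P i j)
      else util m q mu v P i)"

definition psi :: "real \<Rightarrow> real \<Rightarrow> ereal" where
  "psi x \<alpha> = (if \<alpha> > 0 then ereal (x powr \<alpha>)
               else if x = 0 then -\<infinity>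
               else if \<alpha> = 0 then ereal (ln x)
               else ereal (- (x powr \<alpha>)))"

definition psi' :: "real \<Rightarrow> real \<Rightarrow> ereal" where
  "psi' x \<alpha> = (if \<alpha> = 1 then ereal 1
                else if x = 0 \<and> \<alpha> < 1 then \<infinity>
                else if \<alpha> > 0 then ereal (\<alpha> * x powr (\<alpha> - 1))
                else if \<alpha> = 0 then ereal (1 / x)
                else ereal (- \<alpha> * x powr (\<alpha> - 1)))"

(* W_theta(u), theta = (lambda, alpha1, alpha2) *)
definition welfare :: "nat \<Rightarrow> nat \<Rightarrow> real \<Rightarrow> real \<Rightarrow> real \<Rightarrow> (nat \<Rightarrow> real) \<Rightarrow> ereal" where
  "welfare m q lam \<alpha>1 \<alpha>2 u =
     ereal (1 - lam) * (\<Sum>i\<in>users m. psi (u i) \<alpha>1)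
     + ereal lam * (\<Sum>j\<in>items m q. psi (u j) \<alpha>2)"

end

theory Submission imports Defs "HOL-Analysis.Analysis" begin

lemma tan_pos:
  fixes x y a :: real
  assumes "0 < a" "a \<le> 1" "0 \<le> x" "0 < y"
  shows "x powr a \<le> y powr a + a * y powr (a - 1) * (x - y)"
proof -
  have yy: "y powr (a - 1) * y = y powr a"
    using assms by (simp add: powr_diff)
  show ?thesis
  proof (cases "x = 0")
    case True
    have "0 \<le> (1 - a) * y powr a" using assms by simp
    then show ?thesis using True yy assms by (simp add: algebra_simps)
  next
    case False
    hence xp: "x > 0" using assms by simp
    have "(x/y) powr a * 1 powr (1 - a) \<le> a * (x/y) + (1 - a) * 1"
      using Youngs_inequality_0[of a "1-a" "x/y" 1] assms xp by simp
    hence "(x/y) powr a \<le> a * (x/y) + (1 - a)" by simp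
    hence "(x/y) powr a * y powr a \<le> (a * (x/y) + (1 - a)) * y powr a"
      by (rule mult_right_mono) simp
    moreover have "(x/y) powr a * y powr a = x powr a"
      using xp assms by (simp add: powr_divide)
    moreover have "(a * (x/y) + (1 - a)) * y powr a = y powr a + a * y powr (a - 1) * (x - y)"
      using assms by (simp add: powr_diff field_simps)
    ultimately show ?thesis by simp
  qed
qed

lemma tan_zero:
  fixes x y :: real
  assumes "0 < x" "0 < y"
  shows "ln x \<le> ln y + 1 / y * (x - y)"
proof -
  have "ln (x/y) \<le> x/y - 1" using assms by (intro ln_le_minus_one) simp
  then show ?thesis using assms by (simp add: ln_div field_simps)
qed

lemma tan_neg:
  fixes x y a :: real
  assumes "a < 0" "0 < x" "0 < y"
  shows "- (x powr a) \<le> - (y powr a) + (- a) * y powr (a - 1) * (x - y)"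
proof -
  have "(x/y) powr a = exp (a * ln (x/y))" using assms by (simp add: powr_def)
  also have "\<dots> \<ge> 1 + a * ln (x/y)" by simp
  moreover have "a * ln (x/y) \<ge> a * (x/y - 1)"
    using assms ln_le_minus_one[of "x/y"] by (intro mult_left_mono_neg) auto
  ultimately have h: "(x/y) powr a \<ge> 1 + a * (x/y - 1)" by linarith
  hence "(x/y) powr a * y powr a \<ge> (1 + a * (x/y - 1)) * y powr a"
    by (intro mult_right_mono) auto
  moreover have "(x/y) powr a * y powr a = x powr a"
    using assms by (simp add: powr_divide)
  moreover have "(1 + a * (x/y - 1)) * y powr a = y powr a + a * y powr (a - 1) * (x - y)"
    using assms by (simp add: powr_diff field_simps)
  ultimately show ?thesis by simp
qed

lemma psi'_nonneg: "0 \<le> y \<Longrightarrow> 0 \<le> psi' y a"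
  unfolding psi'_def by (auto intro: mult_nonpos_nonneg)

lemma psi_tangent:
  assumes "a \<le> 1" "0 \<le> x" "0 \<le> y" "psi' y a \<noteq> \<infinity>"
  shows "psi x a \<le> psi y a + ereal (real_of_ereal (psi' y a) * (x - y))"
proof (cases "a = 1")
  case True
  then show ?thesis using assms by (simp add: psi_def psi'_def)
next
  case False
  hence a1: "a < 1" using assms by simp
  hence yp: "y > 0" using assms by (cases "y = 0") (auto simp: psi'_def)
  consider "a > 0" | "a = 0" | "a < 0" by linarith
  then show ?thesis
  proof cases
    case 1
    then show ?thesis using tan_pos[of a x y] assms a1 yp False
      by (simp add: psi_def psi'_def)
  next
    case 2
    show ?thesis
    proof (cases "x = 0")
      case True then show ?thesis using 2 by (simp add: psi_def)
    next
      case False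
      then show ?thesis using tan_zero[of x y] assms a1 yp 2
        by (simp add: psi_def psi'_def)
    qed
  next
    case 3
    show ?thesis
    proof (cases "x = 0")
      case True then show ?thesis using 3 by (simp add: psi_def)
    next
      case False
      then show ?thesis using tan_neg[of a x y] assms a1 yp 3
        by (simp add: psi_def psi'_def)
    qed
  qed
qed

lemma psi_sum_tangent:
  assumes "finite X" "a \<le> 1"
    and "\<And>i. i \<in> X \<Longrightarrow> 0 \<le> x i" "\<And>i. i \<in> X \<Longrightarrow> 0 \<le> y i"
    and "\<And>i. i \<in> X \<Longrightarrow> psi' (y i) a \<noteq> \<infinity>"
    and "\<And>i. i \<in> X \<Longrightarrow> real_of_ereal (psi' (y i) a) \<le> \<beta>"
  shows "(\<Sum>i\<in>X. psi (x i) a) \<le> (\<Sum>i\<in>X. psi (y i) a) + ereal (\<beta> * (\<Sum>i\<in>X. \<bar>x i - y i\<bar>))"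
proof -
  let ?g = "\<lambda>i. real_of_ereal (psi' (y i) a)"
  have g0: "0 \<le> ?g i" if "i \<in> X" for i
    using psi'_nonneg[of "y i" a] assms(4)[OF that] by (simp add: real_of_ereal_pos)
  have "(\<Sum>i\<in>X. psi (x i) a) \<le> (\<Sum>i\<in>X. psi (y i) a + ereal (?g i * (x i - y i)))"
    by (intro sum_mono psi_tangent) (auto simp: assms)
  also have "\<dots> = (\<Sum>i\<in>X. psi (y i) a) + ereal (\<Sum>i\<in>X. ?g i * (x i - y i))"
    by (simp add: sum.distrib sum_ereal)
  also have "(\<Sum>i\<in>X. ?g i * (x i - y i)) \<le> (\<Sum>i\<in>X. \<beta> * \<bar>x i - y i\<bar>)"
  proof (intro sum_mono)
    fix i assume i: "i \<in> X"
    have "?g i * (x i - y i) \<le> ?g i * \<bar>x i - y i\<bar>" using g0[OF i] by (intro mult_left_mono) auto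
    also have "\<dots> \<le> \<beta> * \<bar>x i - y i\<bar>" using assms(6)[OF i] by (intro mult_right_mono) auto
    finally show "?g i * (x i - y i) \<le> \<beta> * \<bar>x i - y i\<bar>" .
  qed
  hence "(\<Sum>i\<in>X. psi (y i) a) + ereal (\<Sum>i\<in>X. ?g i * (x i - y i))
     \<le> (\<Sum>i\<in>X. psi (y i) a) + ereal (\<beta> * (\<Sum>i\<in>X. \<bar>x i - y i\<bar>))"
    by (intro add_left_mono) (simp add: sum_distrib_left)
  finally show ?thesis .
qed

lemma half_distrib: "ereal (1/2) * (A + ereal r) = ereal (1/2) * A + ereal (r/2)"
  by (cases A) auto

lemma welfare_tangent:
  assumes "a \<le> 1"
    and "\<And>i. i \<in> {1..m+q} \<Longrightarrow> 0 \<le> x i" "\<And>i. i \<in> {1..m+q} \<Longrightarrow> 0 \<le> y i"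
    and "\<And>i. i \<in> {1..m+q} \<Longrightarrow> psi' (y i) a \<noteq> \<infinity>"
    and "\<And>i. i \<in> {1..m+q} \<Longrightarrow> real_of_ereal (psi' (y i) a) \<le> \<beta>"
  shows "welfare m q (1/2) a a x \<le> welfare m q (1/2) a a y
     + ereal (\<beta>/2 * ((\<Sum>i\<in>users m. \<bar>x i - y i\<bar>) + (\<Sum>i\<in>items m q. \<bar>x i - y i\<bar>)))"
proof -
  have U: "users m \<subseteq> {1..m+q}" and I: "items m q \<subseteq> {1..m+q}"
    by (auto simp: users_def items_def)
  have hU: "(\<Sum>i\<in>users m. psi (x i) a) \<le> (\<Sum>i\<in>users m. psi (y i) a) + ereal (\<beta> * (\<Sum>i\<in>users m. \<bar>x i - y i\<bar>))"
    using U by (intro psi_sum_tangent) (auto simp: assms users_def)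
  have hI: "(\<Sum>i\<in>items m q. psi (x i) a) \<le> (\<Sum>i\<in>items m q. psi (y i) a) + ereal (\<beta> * (\<Sum>i\<in>items m q. \<bar>x i - y i\<bar>))"
    using I by (intro psi_sum_tangent) (auto simp: assms items_def)
  have "welfare m q (1/2) a a x \<le> ereal (1/2) * ((\<Sum>i\<in>users m. psi (y i) a) + ereal (\<beta> * (\<Sum>i\<in>users m. \<bar>x i - y i\<bar>)))
     + ereal (1/2) * ((\<Sum>i\<in>items m q. psi (y i) a) + ereal (\<beta> * (\<Sum>i\<in>items m q. \<bar>x i - y i\<bar>)))"
  proof -
    have "welfare m q (1/2) a a x = ereal (1/2) * (\<Sum>i\<in>users m. psi (x i) a) + ereal (1/2) * (\<Sum>i\<in>items m q. psi (x i) a)"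
      by (simp add: welfare_def)
    then show ?thesis
      by (simp only:) (intro add_mono ereal_mult_left_mono[OF hU] ereal_mult_left_mono[OF hI]; simp)
  qed
  also have "\<dots> = welfare m q (1/2) a a y
     + ereal (\<beta>/2 * ((\<Sum>i\<in>users m. \<bar>x i - y i\<bar>) + (\<Sum>i\<in>items m q. \<bar>x i - y i\<bar>)))"
    unfolding welfare_def half_distrib by (simp add: algebra_simps)
  finally show ?thesis .
qed


lemma RT_zero: "P \<in> ranking_tensors m q \<Longrightarrow> i \<in> {1..m+q} \<Longrightarrow> j \<in> {1..m+q} \<Longrightarrow> k \<in> {1..q}
   \<Longrightarrow> \<not> (i \<in> users m \<and> j \<in> items m q) \<Longrightarrow> P i j k = 0"
  unfolding ranking_tensors_def by blast

lemma RT_nonneg: "P \<in> ranking_tensors m q \<Longrightarrow> i \<in> users m \<Longrightarrow> j \<in> items m q \<Longrightarrow> k \<in> {1..q}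
   \<Longrightarrow> 0 \<le> P i j k"
  unfolding ranking_tensors_def by blast

lemma RT_row: "P \<in> ranking_tensors m q \<Longrightarrow> i \<in> users m \<Longrightarrow> j \<in> items m q \<Longrightarrow> (\<Sum>k=1..q. P i j k) = 1"
  unfolding ranking_tensors_def by blast

lemma RT_col: "P \<in> ranking_tensors m q \<Longrightarrow> i \<in> users m \<Longrightarrow> k \<in> {1..q} \<Longrightarrow> (\<Sum>j\<in>items m q. P i j k) = 1"
  unfolding ranking_tensors_def by blast

lemma Pv_zero: "P \<in> ranking_tensors m q \<Longrightarrow> i \<in> {1..m+q} \<Longrightarrow> j \<in> {1..m+q}
   \<Longrightarrow> \<not> (i \<in> users m \<and> j \<in> items m q) \<Longrightarrow> Pv q v P i j = 0"
  unfolding Pv_def by (simp add: RT_zero)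

lemma Pv_nonneg: "P \<in> ranking_tensors m q \<Longrightarrow> (\<And>k. k \<in> {1..q} \<Longrightarrow> 0 \<le> v k)
   \<Longrightarrow> i \<in> {1..m+q} \<Longrightarrow> j \<in> {1..m+q} \<Longrightarrow> 0 \<le> Pv q v P i j"
  apply (cases "i \<in> users m \<and> j \<in> items m q")
   apply (unfold Pv_def, intro sum_nonneg mult_nonneg_nonneg, auto simp: RT_nonneg)[1]
  apply (subst Pv_zero, auto)
  done

lemma users_items: "users m \<union> items m q = {1..m+q}" "users m \<inter> items m q = {}"
  by (auto simp: users_def items_def)

lemma util_user:
  assumes "P \<in> ranking_tensors m q" "i \<in> users m"
  shows "util m q mu v P i = (\<Sum>j\<in>items m q. mu i j * Pv q v P i j)"
proof -
  have iI: "i \<notin> items m q" "i \<in> {1..m+q}" using assms(2) by (auto simp: users_def items_def)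
  have "util m q mu v P i = (\<Sum>j\<in>{1..m+q}. mu i j * Pv q v P i j)"
    unfolding util_def using assms iI by (intro sum.cong) (auto simp: Pv_zero)
  also have "\<dots> = (\<Sum>j\<in>users m. mu i j * Pv q v P i j) + (\<Sum>j\<in>items m q. mu i j * Pv q v P i j)"
    by (subst users_items(1)[symmetric], subst sum.union_disjoint)
       (auto simp: users_def items_def)
  also have "(\<Sum>j\<in>users m. mu i j * Pv q v P i j) = 0"
    using assms iI by (intro sum.neutral) (auto simp: Pv_zero users_def items_def)
  finally show ?thesis by simp
qed

lemma util_nonneg:
  assumes "P \<in> ranking_tensors m q" "\<And>k. k \<in> {1..q} \<Longrightarrow> 0 \<le> v k"
    "\<And>i j. i \<in> {1..m+q} \<Longrightarrow> j \<in> {1..m+q} \<Longrightarrow> 0 \<le> mu i j" "i \<in> {1..m+q}"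
  shows "0 \<le> util m q mu v P i"
  unfolding util_def using assms
  by (intro sum_nonneg mult_nonneg_nonneg add_nonneg_nonneg Pv_nonneg) auto

lemma util_hat_nonneg:
  assumes "P \<in> ranking_tensors m q" "\<And>k. k \<in> {1..q} \<Longrightarrow> 0 \<le> v k"
    "\<And>i j. i \<in> {1..m+q} \<Longrightarrow> j \<in> {1..m+q} \<Longrightarrow> 0 \<le> mu i j"
    "\<And>i j. i \<in> users m \<Longrightarrow> j \<in> items m q \<Longrightarrow> 0 \<le> muhat i j" "i \<in> {1..m+q}"
  shows "0 \<le> util_hat m q muhat mu v P i"
proof (cases "i \<in> users m")
  case True
  then show ?thesis unfolding util_hat_def using assms
    by (simp, intro sum_nonneg mult_nonneg_nonneg Pv_nonneg) (auto simp: users_def items_def)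
next
  case False
  then show ?thesis unfolding util_hat_def using util_nonneg[OF assms(1,2,3,5)] by simp
qed

lemma Pv_sq:
  assumes "P \<in> ranking_tensors m q" "\<And>k. k \<in> {1..q} \<Longrightarrow> 0 \<le> v k" "i \<in> users m" "j \<in> items m q"
  shows "(Pv q v P i j)^2 \<le> (\<Sum>k=1..q. P i j k * (v k)^2)"
proof -
  have nn: "\<And>k. k \<in> {1..q} \<Longrightarrow> 0 \<le> P i j k" using assms RT_nonneg by blast
  have "Pv q v P i j = (\<Sum>k=1..q. \<bar>sqrt (P i j k)\<bar> * \<bar>sqrt (P i j k) * v k\<bar>)"
    unfolding Pv_def using nn assms(2)
    by (intro sum.cong) (auto simp: abs_mult real_sqrt_mult[symmetric])
  also have "\<dots> \<le> L2_set (\<lambda>k. sqrt (P i j k)) {1..q} * L2_set (\<lambda>k. sqrt (P i j k) * v k) {1..q}"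
    by (rule L2_set_mult_ineq)
  also have "L2_set (\<lambda>k. sqrt (P i j k)) {1..q} = 1"
    unfolding L2_set_def using nn RT_row[OF assms(1,3,4)] by simp
  also have "L2_set (\<lambda>k. sqrt (P i j k) * v k) {1..q} = sqrt (\<Sum>k=1..q. P i j k * (v k)^2)"
    unfolding L2_set_def using nn by (intro arg_cong[where f=sqrt] sum.cong) (auto simp: power_mult_distrib)
  finally have h: "Pv q v P i j \<le> sqrt (\<Sum>k=1..q. P i j k * (v k)^2)" by simp
  have "0 \<le> Pv q v P i j" using assms by (intro Pv_nonneg) (auto simp: users_def items_def)
  hence "(Pv q v P i j)^2 \<le> (sqrt (\<Sum>k=1..q. P i j k * (v k)^2))^2"
    using h by (intro power_mono) auto
  also have "\<dots> = (\<Sum>k=1..q. P i j k * (v k)^2)"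
    using nn by (intro real_sqrt_pow2 sum_nonneg) auto
  finally show ?thesis .
qed

lemma L3:
  assumes P: "P \<in> ranking_tensors m q" and v: "\<And>k. k \<in> {1..q} \<Longrightarrow> 0 \<le> v k"
  shows "(\<Sum>i\<in>users m. \<bar>util m q mu v P i - util_hat m q muhat mu v P i\<bar>)
    \<le> sqrt (real (m+q) * (\<Sum>k=1..q. (v k)^2)) * sqrt (\<Sum>(i,j)\<in>users m \<times> items m q. (muhat i j - mu i j)^2)"
proof -
  let ?U = "users m" and ?I = "items m q"
  let ?e = "\<lambda>p. muhat (fst p) (snd p) - mu (fst p) (snd p)"
  let ?f = "\<lambda>p. Pv q v P (fst p) (snd p)"
  have fin: "finite ?U" "finite ?I" by (auto simp: users_def items_def)
  have "(\<Sum>i\<in>?U. \<bar>util m q mu v P i - util_hat m q muhat mu v P i\<bar>)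
      \<le> (\<Sum>i\<in>?U. \<Sum>j\<in>?I. \<bar>?e (i,j)\<bar> * \<bar>?f (i,j)\<bar>)"
  proof (intro sum_mono)
    fix i assume i: "i \<in> ?U"
    have "util m q mu v P i - util_hat m q muhat mu v P i = (\<Sum>j\<in>?I. (mu i j - muhat i j) * Pv q v P i j)"
      using i by (simp add: util_user[OF P i] util_hat_def sum_subtractf[symmetric] algebra_simps)
    also have "\<bar>\<dots>\<bar> \<le> (\<Sum>j\<in>?I. \<bar>(mu i j - muhat i j) * Pv q v P i j\<bar>)" by (rule sum_abs)
    also have "\<dots> = (\<Sum>j\<in>?I. \<bar>?e (i,j)\<bar> * \<bar>?f (i,j)\<bar>)"
      by (intro sum.cong) (auto simp: abs_mult abs_minus_commute)
    finally show "\<bar>util m q mu v P i - util_hat m q muhat mu v P i\<bar> \<le> (\<Sum>j\<in>?I. \<bar>?e (i,j)\<bar> * \<bar>?f (i,j)\<bar>)" .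
  qed
  also have "\<dots> = (\<Sum>p\<in>?U \<times> ?I. \<bar>?e p\<bar> * \<bar>?f p\<bar>)"
    by (subst sum.cartesian_product) (simp add: case_prod_beta)
  also have "\<dots> \<le> L2_set ?e (?U \<times> ?I) * L2_set ?f (?U \<times> ?I)"
    by (rule L2_set_mult_ineq)
  also have "L2_set ?e (?U \<times> ?I) = sqrt (\<Sum>(i,j)\<in>?U \<times> ?I. (muhat i j - mu i j)^2)"
    unfolding L2_set_def by (simp add: case_prod_beta)
  also have "L2_set ?f (?U \<times> ?I) \<le> sqrt (real (m+q) * (\<Sum>k=1..q. (v k)^2))"
  proof -
    have "(\<Sum>p\<in>?U \<times> ?I. (?f p)^2) = (\<Sum>i\<in>?U. \<Sum>j\<in>?I. (Pv q v P i j)^2)"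
      by (subst sum.cartesian_product) (simp add: case_prod_beta)
    also have "\<dots> \<le> (\<Sum>i\<in>?U. \<Sum>j\<in>?I. \<Sum>k=1..q. P i j k * (v k)^2)"
      by (intro sum_mono Pv_sq[OF P v]) auto
    also have "\<dots> = (\<Sum>i\<in>?U. \<Sum>k=1..q. (v k)^2 * (\<Sum>j\<in>?I. P i j k))"
      by (rule sum.cong[OF refl], subst sum.swap) (simp add: sum_distrib_left mult.commute)
    also have "\<dots> = (\<Sum>i\<in>?U. \<Sum>k=1..q. (v k)^2)"
      by (intro sum.cong refl) (simp add: RT_col[OF P])
    also have "\<dots> = real m * (\<Sum>k=1..q. (v k)^2)" by (simp add: users_def)
    also have "\<dots> \<le> real (m+q) * (\<Sum>k=1..q. (v k)^2)"
      by (intro mult_right_mono sum_nonneg) auto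
    finally show ?thesis unfolding L2_set_def by (rule real_sqrt_le_mono)
  qed
  hence "sqrt (\<Sum>(i,j)\<in>?U \<times> ?I. (muhat i j - mu i j)^2) * L2_set ?f (?U \<times> ?I)
     \<le> sqrt (\<Sum>(i,j)\<in>?U \<times> ?I. (muhat i j - mu i j)^2) * sqrt (real (m+q) * (\<Sum>k=1..q. (v k)^2))"
    by (intro mult_left_mono real_sqrt_ge_zero sum_nonneg) auto
  finally show ?thesis by (simp add: mult.commute)
qed


lemma welfare_cong:
  "(\<And>i. i \<in> {1..m+q} \<Longrightarrow> x i = y i) \<Longrightarrow> welfare m q l a b x = welfare m q l a b y"
  unfolding welfare_def
  by (intro arg_cong2[where f="(+)"] arg_cong2[where f="(*)"] refl sum.cong)
     (auto simp: users_def items_def)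

theorem mainTheorem11:
  fixes m q :: nat and v :: "nat \<Rightarrow> real" and mu muhat :: "nat \<Rightarrow> nat \<Rightarrow> real"
    and \<alpha> :: real and Phat Pstar :: "nat \<Rightarrow> nat \<Rightarrow> nat \<Rightarrow> real"
  assumes v_mono: "\<And>k l. 1 \<le> k \<Longrightarrow> k \<le> l \<Longrightarrow> l \<le> q \<Longrightarrow> v l \<le> v k"
    and v_nonneg: "\<And>k. k \<in> {1..q} \<Longrightarrow> 0 \<le> v k"
    and mu_nonneg: "\<And>i j. i \<in> {1..m+q} \<Longrightarrow> j \<in> {1..m+q} \<Longrightarrow> 0 \<le> mu i j"
    and muhat_nonneg: "\<And>i j. i \<in> users m \<Longrightarrow> j \<in> items m q \<Longrightarrow> 0 \<le> muhat i j"
    and alpha_le: "\<alpha> \<le> 1"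
    and Phat: "Phat \<in> ranking_tensors m q"
    and Phat_max: "\<And>P. P \<in> ranking_tensors m q \<Longrightarrow>
        welfare m q (1/2) \<alpha> \<alpha> (util_hat m q muhat mu v P)
          \<le> welfare m q (1/2) \<alpha> \<alpha> (util_hat m q muhat mu v Phat)"
    and Pstar: "Pstar \<in> ranking_tensors m q"
    and Pstar_max: "\<And>P. P \<in> ranking_tensors m q \<Longrightarrow>
        welfare m q (1/2) \<alpha> \<alpha> (util m q mu v P)
          \<le> welfare m q (1/2) \<alpha> \<alpha> (util m q mu v Pstar)"
  shows "welfare m q (1/2) \<alpha> \<alpha> (util m q mu v Pstar)
    \<le> welfare m q (1/2) \<alpha> \<alpha> (util m q mu v Phat)
       + ereal 4
         * max (SUP i\<in>{1..m+q}. psi' (util m q mu v Phat i) \<alpha>)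
               (SUP i\<in>{1..m+q}. psi' (util_hat m q muhat mu v Pstar i) \<alpha>)
         * ereal (sqrt (real (m+q) * (\<Sum>k=1..q. (v k)^2)))
         * ereal (sqrt (\<Sum>(i,j)\<in>users m \<times> items m q. (muhat i j - mu i j)^2))"
proof -
  let ?W = "welfare m q (1/2) \<alpha> \<alpha>"
  define a where "a = util m q mu v Pstar"
  define b where "b = util_hat m q muhat mu v Pstar"
  define c where "c = util m q mu v Phat"
  define d where "d = util_hat m q muhat mu v Phat"
  define V where "V = sqrt (real (m+q) * (\<Sum>k=1..q. (v k)^2))"
  define E where "E = sqrt (\<Sum>(i,j)\<in>users m \<times> items m q. (muhat i j - mu i j)^2)"
  define B where "B = max (SUP i\<in>{1..m+q}. psi' (c i) \<alpha>) (SUP i\<in>{1..m+q}. psi' (b i) \<alpha>)"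
  have V0: "0 \<le> V" unfolding V_def by (intro real_sqrt_ge_zero mult_nonneg_nonneg sum_nonneg) auto
  have E0: "0 \<le> E" unfolding E_def by (intro real_sqrt_ge_zero sum_nonneg) auto
  have D1: "(\<Sum>i\<in>users m. \<bar>a i - b i\<bar>) \<le> V * E"
    unfolding a_def b_def V_def E_def by (rule L3[OF Pstar v_nonneg])
  have D2: "(\<Sum>i\<in>users m. \<bar>c i - d i\<bar>) \<le> V * E"
    unfolding c_def d_def V_def E_def by (rule L3[OF Phat v_nonneg])
  have itab: "a i = b i" "c i = d i" if "i \<in> items m q" for i
    using that unfolding a_def b_def c_def d_def util_hat_def by (auto simp: users_def items_def)
  have Wbd: "?W b \<le> ?W d" unfolding b_def d_def by (rule Phat_max[OF Pstar])
  have a0: "0 \<le> a i" "0 \<le> c i" "0 \<le> b i" "0 \<le> d i" if "i \<in> {1..m+q}" for i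
    unfolding a_def b_def c_def d_def using that
    by (auto intro!: util_nonneg util_hat_nonneg Pstar Phat v_nonneg mu_nonneg muhat_nonneg)
  show ?thesis
  proof (cases "V * E = 0")
    case True
    have "(\<Sum>i\<in>users m. \<bar>a i - b i\<bar>) \<le> 0" using D1 True by simp
    hence "\<forall>i\<in>users m. \<bar>a i - b i\<bar> = 0"
      by (subst sum_nonneg_eq_0_iff[symmetric]) (auto simp: users_def intro: antisym)
    hence ab: "?W a = ?W b" using itab users_items(1)[of m q]
      by (intro welfare_cong) auto
    have "(\<Sum>i\<in>users m. \<bar>c i - d i\<bar>) \<le> 0" using D2 True by simp
    hence "\<forall>i\<in>users m. \<bar>c i - d i\<bar> = 0"
      by (subst sum_nonneg_eq_0_iff[symmetric]) (auto simp: users_def intro: antisym)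
    hence cd: "?W c = ?W d" using itab users_items(1)[of m q]
      by (intro welfare_cong) auto
    have p0: "ereal 4 * B * ereal V * ereal E = 0" using True by auto
    have "?W a \<le> ?W c + ereal 4 * B * ereal V * ereal E" unfolding p0 using ab cd Wbd by simp
    then show ?thesis
      unfolding a_def[symmetric] b_def[symmetric] c_def[symmetric] d_def[symmetric]
        B_def[symmetric] V_def[symmetric] E_def[symmetric] by simp
  next
    case False
    hence Vp: "V > 0" and Ep: "E > 0" using V0 E0 by auto
    have "m + q \<noteq> 0" using Vp unfolding V_def by auto
    hence one: "1 \<in> {1..m+q}" by auto
    have cB: "psi' (c i) \<alpha> \<le> B" if "i \<in> {1..m+q}" for i
      unfolding B_def le_max_iff_disj using SUP_upper[OF that, of "\<lambda>i. psi' (c i) \<alpha>"] by blast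
    have bB: "psi' (b i) \<alpha> \<le> B" if "i \<in> {1..m+q}" for i
      unfolding B_def le_max_iff_disj using SUP_upper[OF that, of "\<lambda>i. psi' (b i) \<alpha>"] by blast
    have B0: "0 \<le> B" using cB[OF one] psi'_nonneg[OF a0(2)[OF one], of \<alpha>] by (rule order_trans[rotated])
    show ?thesis
    proof (cases "B = \<infinity>")
      case True
      have pinf: "ereal 4 * B * ereal V * ereal E = \<infinity>" using True Vp Ep by simp
      have "?W a \<le> ?W c + ereal 4 * B * ereal V * ereal E" unfolding pinf by simp
      then show ?thesis
        unfolding a_def[symmetric] c_def[symmetric] b_def[symmetric]
          B_def[symmetric] V_def[symmetric] E_def[symmetric] by simp
    next
      case False
      define \<beta> where "\<beta> = real_of_ereal B"
      have Beq: "B = ereal \<beta>" using False B0 unfolding \<beta>_def by (cases B) auto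
      have fin: "psi' x \<alpha> \<noteq> \<infinity> \<and> real_of_ereal (psi' x \<alpha>) \<le> \<beta>"
        if "psi' x \<alpha> \<le> B" "0 \<le> x" for x
      proof -
        have "0 \<le> psi' x \<alpha>" using psi'_nonneg that(2) by blast
        then show ?thesis using that(1) Beq by (cases "psi' x \<alpha>") auto
      qed
      have fb: "psi' (b i) \<alpha> \<noteq> \<infinity>" "real_of_ereal (psi' (b i) \<alpha>) \<le> \<beta>" if "i \<in> {1..m+q}" for i
        using fin[OF bB[OF that] a0(3)[OF that]] by auto
      have fc: "psi' (c i) \<alpha> \<noteq> \<infinity>" "real_of_ereal (psi' (c i) \<alpha>) \<le> \<beta>" if "i \<in> {1..m+q}" for i
        using fin[OF cB[OF that] a0(2)[OF that]] by auto
      have "?W a \<le> ?W b + ereal (\<beta>/2 * ((\<Sum>i\<in>users m. \<bar>a i - b i\<bar>) + (\<Sum>i\<in>items m q. \<bar>a i - b i\<bar>)))"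
        using fb a0 by (intro welfare_tangent alpha_le) auto
      also have "(\<Sum>i\<in>items m q. \<bar>a i - b i\<bar>) = 0" by (simp add: itab)
      finally have h1: "?W a \<le> ?W b + ereal (\<beta>/2 * (\<Sum>i\<in>users m. \<bar>a i - b i\<bar>))" by simp
      have "?W d \<le> ?W c + ereal (\<beta>/2 * ((\<Sum>i\<in>users m. \<bar>d i - c i\<bar>) + (\<Sum>i\<in>items m q. \<bar>d i - c i\<bar>)))"
        using fc a0 by (intro welfare_tangent alpha_le) auto
      also have "(\<Sum>i\<in>items m q. \<bar>d i - c i\<bar>) = 0" by (simp add: itab)
      finally have h2: "?W d \<le> ?W c + ereal (\<beta>/2 * (\<Sum>i\<in>users m. \<bar>c i - d i\<bar>))"
        by (simp add: abs_minus_commute)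
      have b0: "0 \<le> \<beta>" using B0 Beq by simp
      have r: "\<beta>/2 * (\<Sum>i\<in>users m. \<bar>a i - b i\<bar>) + \<beta>/2 * (\<Sum>i\<in>users m. \<bar>c i - d i\<bar>) \<le> 4 * \<beta> * V * E"
      proof -
        have "\<beta>/2 * (\<Sum>i\<in>users m. \<bar>a i - b i\<bar>) \<le> \<beta>/2 * (V * E)" using D1 b0 by (intro mult_left_mono) auto
        moreover have "\<beta>/2 * (\<Sum>i\<in>users m. \<bar>c i - d i\<bar>) \<le> \<beta>/2 * (V * E)" using D2 b0 by (intro mult_left_mono) auto
        moreover have "0 \<le> \<beta> * V * E" using b0 V0 E0 by simp
        ultimately show ?thesis by (simp add: algebra_simps)
      qed
      have "?W a \<le> ?W d + ereal (\<beta>/2 * (\<Sum>i\<in>users m. \<bar>a i - b i\<bar>))"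
        using h1 Wbd by (meson add_right_mono order_trans)
      also have "\<dots> \<le> ?W c + ereal (\<beta>/2 * (\<Sum>i\<in>users m. \<bar>c i - d i\<bar>)) + ereal (\<beta>/2 * (\<Sum>i\<in>users m. \<bar>a i - b i\<bar>))"
        using h2 by (rule add_right_mono)
      also have "\<dots> = ?W c + ereal (\<beta>/2 * (\<Sum>i\<in>users m. \<bar>a i - b i\<bar>) + \<beta>/2 * (\<Sum>i\<in>users m. \<bar>c i - d i\<bar>))"
        by (simp only: plus_ereal.simps(1)[symmetric] ac_simps)
      also have "\<dots> \<le> ?W c + ereal (4 * \<beta> * V * E)"
        using r by (intro add_left_mono) simp
      also have "ereal (4 * \<beta> * V * E) = ereal 4 * B * ereal V * ereal E" by (simp add: Beq)
      finally show ?thesis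
        unfolding a_def[symmetric] c_def[symmetric] b_def[symmetric]
          B_def[symmetric] V_def[symmetric] E_def[symmetric] .
    qed
  qed
qed

end
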